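(* Let $X\in\mathbb{R}^{n\times p}$ have unit $\ell_2$-norm columns, let $\beta\in\mathbb{R}^p$ be $k$-sparse with support $\mathcal{S}$, let $\eta\in\mathbb{R}^n$ have independent $\mathcal{N}(0,\sigma^2)$ entries, and let $y=X\beta+\eta$. Suppose $X$ satisfies the $(k,b)$-screening condition for $\beta$ with parameter $b=b(n,p)\in(0,1/\sqrt{k})$, and assume $$\frac{\beta_{\min}}{\|\beta\|_2} > 2b + \frac{4\sqrt{\sigma^2\log p}}{\|\beta\|_2}.$$ Then, whenever the event $\mathcal{G}_\eta=\{\|X^\top\eta\|_\infty\le 2\sqrt{\sigma^2\log p}\}$ occurs, the output $\hat{\mathcal{S}}$ of Algorithm 1 satisfies $\mathcal{S}\subset\hat{\mathcal{S}}$ for every integer $d\le p$ with $$d \ge \left\lceil \frac{\sqrt{k}}{\frac{\beta_{\min}}{\|\beta\|_2} - 2b - \frac{4\sqrt{\sigma^2\log p}}{\|\beta\|_2}}\right\rceil .$$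
   Context: Notation: $[[p]]=\{1,\dots,p\}$; $n,p,k$ are positive integers with $p\ge 2$ and $k<n$. $X\in\mathbb{R}^{n\times p}$ has columns $X_1,\dots,X_p$, each with $\|X_j\|_2=1$. $\beta\in\mathbb{R}^p$ is $k$-sparse: its support $\mathcal{S}=\{i\in[[p]]:\beta_i\neq 0\}$ has exactly $k$ elements; $\mathcal{S}^c=[[p]]\setminus\mathcal{S}$; $\beta_{\min}=\min_{i\in\mathcal{S}}|\beta_i|$. Algorithm 1 (marginal correlation screening): given $X$, $y$ and an integer $d\in\{1,\dots,p\}$, compute $w=X^\top y$ and output a set $\hat{\mathcal{S}}\subset[[p]]$ with $|\hat{\mathcal{S}}|=d$ consisting of indices of the $d$ largest values of $|w_i|$, i.e. $|w_i|\ge |w_j|$ for all $i\in\hat{\mathcal{S}}$, $j\notin\hat{\mathcal{S}}$ (ties broken arbitrarily). $(k,b)$-screening condition: for a fixed $k$-sparse $\beta$ with support $\mathcal{S}$, the matrix $X$ (unit-norm columns) satisfies it if there is $b=b(n,p)$ with $0<b<1/\sqrt{k}$ such that (SC-1) $\max_{i\in\mathcal{S}}\big|\sum_{j\in\mathcal{S},\,j\neq i}X_i^\top X_j\beta_j\big|\le b\,\|\beta\|_2$, and (SC-2) $\max_{i\in\mathcal{S}^c}\big|\sum_{j\in\mathcal{S}}X_i^\top X_j\beta_j\big|\le b\,\|\beta\|_2$. *)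

theory Defs
  imports Complex_Main
begin

text \<open>Vectors in R^m are functions nat => real, indexed by {1..m}.
  A matrix X in R^(n x p) is a function nat => nat => real, entry X r j
  (row r in {1..n}, column j in {1..p}); column X_j is (\<lambda>r. X r j).\<close>

definition col_inner :: "nat \<Rightarrow> (nat \<Rightarrow> nat \<Rightarrow> real) \<Rightarrow> nat \<Rightarrow> nat \<Rightarrow> real" where
  "col_inner n X i j = (\<Sum>r\<in>{1..n}. X r i * X r j)"

definition vnorm :: "nat \<Rightarrow> (nat \<Rightarrow> real) \<Rightarrow> real" where
  "vnorm m v = sqrt (\<Sum>i\<in>{1..m}. (v i)\<^sup>2)"

definition support :: "nat \<Rightarrow> (nat \<Rightarrow> real) \<Rightarrow> nat set" where
  "support p \<beta> = {i\<in>{1..p}. \<beta> i \<noteq> 0}"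

definition beta_min :: "nat \<Rightarrow> (nat \<Rightarrow> real) \<Rightarrow> real" where
  "beta_min p \<beta> = Min ((\<lambda>i. \<bar>\<beta> i\<bar>) ` support p \<beta>)"

definition XT_mul :: "nat \<Rightarrow> (nat \<Rightarrow> nat \<Rightarrow> real) \<Rightarrow> (nat \<Rightarrow> real) \<Rightarrow> nat \<Rightarrow> real" where
  "XT_mul n X v j = (\<Sum>r\<in>{1..n}. X r j * v r)"

definition X_mul :: "nat \<Rightarrow> (nat \<Rightarrow> nat \<Rightarrow> real) \<Rightarrow> (nat \<Rightarrow> real) \<Rightarrow> nat \<Rightarrow> real" where
  "X_mul p X v r = (\<Sum>j\<in>{1..p}. X r j * v j)"

definition screening_cond ::
  "nat \<Rightarrow> nat \<Rightarrow> nat \<Rightarrow> (nat \<Rightarrow> nat \<Rightarrow> real) \<Rightarrow> (nat \<Rightarrow> real) \<Rightarrow> real \<Rightarrow> bool" where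
  "screening_cond n p k X \<beta> b \<longleftrightarrow>
     0 < b \<and> b < 1 / sqrt (real k) \<and>
     (\<forall>i\<in>support p \<beta>.
        \<bar>\<Sum>j\<in>support p \<beta> - {i}. col_inner n X i j * \<beta> j\<bar> \<le> b * vnorm p \<beta>) \<and>
     (\<forall>i\<in>{1..p} - support p \<beta>.
        \<bar>\<Sum>j\<in>support p \<beta>. col_inner n X i j * \<beta> j\<bar> \<le> b * vnorm p \<beta>)"

text \<open>Algorithm 1: S_hat is a possible output of marginal correlation screening
  with input X, y, d (any tie-breaking).\<close>
definition screening_output ::
  "nat \<Rightarrow> nat \<Rightarrow> (nat \<Rightarrow> nat \<Rightarrow> real) \<Rightarrow> (nat \<Rightarrow> real) \<Rightarrow> nat \<Rightarrow> nat set \<Rightarrow> bool" where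
  "screening_output n p X y d S_hat \<longleftrightarrow>
     (let w = XT_mul n X y in
       S_hat \<subseteq> {1..p} \<and> card S_hat = d \<and>
       (\<forall>i\<in>S_hat. \<forall>j\<in>{1..p} - S_hat. \<bar>w j\<bar> \<le> \<bar>w i\<bar>))"

end

theory Submission
  imports Defs
begin

theorem theorem1:
  fixes n p k d :: nat and X :: "nat \<Rightarrow> nat \<Rightarrow> real"
    and \<beta> \<eta> y :: "nat \<Rightarrow> real" and \<sigma> b :: real and S_hat :: "nat set"
  assumes "0 < n" "2 \<le> p" "0 < k" "k < n"
    and unit_cols: "\<forall>j\<in>{1..p}. vnorm n (\<lambda>r. X r j) = 1"
    and sparse: "card (support p \<beta>) = k"
    and sigma: "0 < \<sigma>"
    and y_def: "\<forall>r\<in>{1..n}. y r = X_mul p X \<beta> r + \<eta> r"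
    and screen: "screening_cond n p k X \<beta> b"
    and gap: "beta_min p \<beta> / vnorm p \<beta>
               > 2 * b + 4 * sqrt (\<sigma>\<^sup>2 * ln (real p)) / vnorm p \<beta>"
    and event: "\<forall>j\<in>{1..p}. \<bar>XT_mul n X \<eta> j\<bar> \<le> 2 * sqrt (\<sigma>\<^sup>2 * ln (real p))"
    and d_le: "d \<le> p"
    and d_ge: "of_int \<lceil>sqrt (real k) /
                 (beta_min p \<beta> / vnorm p \<beta> - 2 * b
                   - 4 * sqrt (\<sigma>\<^sup>2 * ln (real p)) / vnorm p \<beta>)\<rceil> \<le> real d"
    and out: "screening_output n p X y d S_hat"
  shows "support p \<beta> \<subseteq> S_hat"
proof -
  define S where "S = support p \<beta>"
  define N where "N = vnorm p \<beta>"
  define s where "s = sqrt (\<sigma>\<^sup>2 * ln (real p))"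
  define bm where "bm = beta_min p \<beta>"
  define w where "w = XT_mul n X y"
  have Ssub: "S \<subseteq> {1..p}" unfolding S_def support_def by auto
  have finS: "finite S" using Ssub finite_subset by blast
  have cardS: "card S = k" using sparse S_def by simp
  have Sne: "S \<noteq> {}" using cardS \<open>0<k\<close> by auto
  have bS: "\<And>i. i \<in> S \<Longrightarrow> \<beta> i \<noteq> 0" unfolding S_def support_def by auto
  have bnS: "\<And>i. i \<in> {1..p} \<Longrightarrow> i \<notin> S \<Longrightarrow> \<beta> i = 0" unfolding S_def support_def by auto
  have bm_le: "\<And>i. i \<in> S \<Longrightarrow> bm \<le> \<bar>\<beta> i\<bar>"
    unfolding bm_def beta_min_def S_def[symmetric] using finS by auto
  have bm_in: "bm \<in> (\<lambda>i. \<bar>\<beta> i\<bar>) ` S"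
    unfolding bm_def beta_min_def S_def[symmetric] using finS Sne by (intro Min_in) auto
  have bm_pos: "bm > 0" using bm_in bS by auto
  have sumsq: "(\<Sum>i\<in>{1..p}. (\<beta> i)\<^sup>2) = (\<Sum>i\<in>S. (\<beta> i)\<^sup>2)"
    by (rule sum.mono_neutral_right) (use Ssub bnS in auto)
  have "(\<Sum>i\<in>S. bm\<^sup>2) \<le> (\<Sum>i\<in>S. (\<beta> i)\<^sup>2)"
  proof (rule sum_mono)
    fix i assume "i \<in> S"
    then have "bm \<le> \<bar>\<beta> i\<bar>" by (rule bm_le)
    then have "bm\<^sup>2 \<le> \<bar>\<beta> i\<bar>\<^sup>2" using bm_pos by (intro power_mono) auto
    then show "bm\<^sup>2 \<le> (\<beta> i)\<^sup>2" by simp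
  qed
  then have ksq: "real k * bm\<^sup>2 \<le> N\<^sup>2"
    unfolding N_def vnorm_def using sumsq cardS by (simp add: sum_nonneg)
  have Npos: "N > 0"
  proof -
    have "0 < real k * bm\<^sup>2" using \<open>0<k\<close> bm_pos by simp
    then have "0 < N\<^sup>2" using ksq by linarith
    moreover have "N \<ge> 0" unfolding N_def vnorm_def by (simp add: sum_nonneg)
    ultimately show ?thesis by (metis less_eq_real_def power_zero_numeral zero_less_power2)
  qed
  have bm_sqrtk: "bm * sqrt (real k) \<le> N"
  proof -
    have "sqrt (real k * bm\<^sup>2) \<le> sqrt (N\<^sup>2)" using ksq by (rule real_sqrt_le_mono)
    then show ?thesis using bm_pos Npos by (simp add: real_sqrt_mult mult.commute)
  qed
  have s_nn: "s \<ge> 0" unfolding s_def using \<open>2\<le>p\<close> by simp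
  have b_pos: "b > 0" using screen unfolding screening_cond_def by simp
  have sc1: "\<And>i. i \<in> S \<Longrightarrow> \<bar>\<Sum>j\<in>S - {i}. col_inner n X i j * \<beta> j\<bar> \<le> b * N"
    using screen unfolding screening_cond_def S_def N_def by auto
  have sc2: "\<And>i. i \<in> {1..p} - S \<Longrightarrow> \<bar>\<Sum>j\<in>S. col_inner n X i j * \<beta> j\<bar> \<le> b * N"
    using screen unfolding screening_cond_def S_def N_def by auto
  have ev: "\<And>j. j \<in> {1..p} \<Longrightarrow> \<bar>XT_mul n X \<eta> j\<bar> \<le> 2 * s" using event s_def by auto
  have ci1: "\<And>j. j \<in> {1..p} \<Longrightarrow> col_inner n X j j = 1"
  proof -
    fix j assume "j \<in> {1..p}"
    then have "sqrt (\<Sum>r\<in>{1..n}. (X r j)\<^sup>2) = 1" using unit_cols unfolding vnorm_def by auto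
    then have "(\<Sum>r\<in>{1..n}. (X r j)\<^sup>2) = 1" by simp
    then show "col_inner n X j j = 1" unfolding col_inner_def by (simp add: power2_eq_square)
  qed
  have wform: "w j = (\<Sum>i\<in>S. col_inner n X j i * \<beta> i) + XT_mul n X \<eta> j" for j
  proof -
    have "w j = (\<Sum>r\<in>{1..n}. X r j * (X_mul p X \<beta> r + \<eta> r))"
      unfolding w_def XT_mul_def using y_def by (intro sum.cong) auto
    also have "\<dots> = (\<Sum>r\<in>{1..n}. X r j * X_mul p X \<beta> r) + XT_mul n X \<eta> j"
      unfolding XT_mul_def by (simp add: distrib_left sum.distrib)
    also have "(\<Sum>r\<in>{1..n}. X r j * X_mul p X \<beta> r) = (\<Sum>i\<in>{1..p}. col_inner n X j i * \<beta> i)"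
      unfolding X_mul_def col_inner_def
      by (simp add: sum_distrib_left sum_distrib_right mult.assoc) (rule sum.swap)
    also have "\<dots> = (\<Sum>i\<in>S. col_inner n X j i * \<beta> i)"
      by (rule sum.mono_neutral_right) (use Ssub bnS in auto)
    finally show ?thesis .
  qed
  have gap2: "bm > 2 * b * N + 4 * s"
  proof -
    have "bm / N > 2 * b + 4 * s / N" using gap unfolding bm_def N_def s_def by simp
    then have "bm / N * N > (2 * b + 4 * s / N) * N" using Npos by (intro mult_strict_right_mono) auto
    moreover have "bm / N * N = bm" using Npos by simp
    moreover have "(2 * b + 4 * s / N) * N = 2 * b * N + 4 * s" using Npos by (simp add: field_simps)
    ultimately show ?thesis by linarith
  qed
  have low: "\<bar>w i\<bar> \<ge> bm - b * N - 2 * s" if "i \<in> S" for i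
  proof -
    have iP: "i \<in> {1..p}" using that Ssub by auto
    have "(\<Sum>j\<in>S. col_inner n X i j * \<beta> j) = col_inner n X i i * \<beta> i + (\<Sum>j\<in>S - {i}. col_inner n X i j * \<beta> j)"
      using finS that by (simp add: sum.remove)
    then have "w i = \<beta> i + (\<Sum>j\<in>S - {i}. col_inner n X i j * \<beta> j) + XT_mul n X \<eta> i"
      using wform ci1[OF iP] by simp
    then show ?thesis using sc1[OF that] ev[OF iP] bm_le[OF that] by linarith
  qed
  have high: "\<bar>w j\<bar> \<le> b * N + 2 * s" if "j \<in> {1..p} - S" for j
    proof -
    have "\<bar>XT_mul n X \<eta> j\<bar> \<le> 2 * s" using ev that by auto
    then show ?thesis using wform[of j] sc2[OF that] by linarith
  qed
  have sep: "\<bar>w j\<bar> < \<bar>w i\<bar>" if "i \<in> S" "j \<in> {1..p} - S" for i j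
    using low[OF that(1)] high[OF that(2)] gap2 by linarith
  have dk: "k \<le> d"
  proof -
    define g where "g = bm / N - 2 * b - 4 * s / N"
    have gpos: "g > 0" using gap unfolding g_def bm_def N_def s_def by simp
    have "4 * s / N \<ge> 0" using s_nn Npos by simp
    then have "g \<le> bm / N" unfolding g_def using b_pos by linarith
    also have "\<dots> \<le> 1 / sqrt (real k)" using bm_sqrtk Npos \<open>0<k\<close> by (simp add: field_simps)
    finally have "g * sqrt (real k) \<le> 1" using \<open>0<k\<close> by (simp add: field_simps)
    then have "g * sqrt (real k) * sqrt (real k) \<le> 1 * sqrt (real k)"
      by (intro mult_right_mono) auto
    then have "sqrt (real k) * sqrt (real k) \<le> sqrt (real k) / g"
      using gpos by (simp add: pos_le_divide_eq mult.commute mult.left_commute)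
    then have "real k \<le> sqrt (real k) / g" by simp
    also have "\<dots> \<le> of_int \<lceil>sqrt (real k) / g\<rceil>" by linarith
    also have "\<dots> \<le> real d" using d_ge unfolding g_def bm_def N_def s_def by simp
    finally show ?thesis by simp
  qed
  have Shsub: "S_hat \<subseteq> {1..p}" and cardSh: "card S_hat = d"
    and ord: "\<And>i j. i \<in> S_hat \<Longrightarrow> j \<in> {1..p} - S_hat \<Longrightarrow> \<bar>w j\<bar> \<le> \<bar>w i\<bar>"
    using out unfolding screening_output_def w_def Let_def by auto
  show ?thesis
  proof (rule ccontr)
    assume "\<not> support p \<beta> \<subseteq> S_hat"
    then obtain i where iS: "i \<in> S" and iN: "i \<notin> S_hat" unfolding S_def by auto
    have iP: "i \<in> {1..p}" using iS Ssub by auto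
    have "S_hat \<subseteq> S - {i}"
    proof
      fix j assume jS: "j \<in> S_hat"
      have "\<bar>w i\<bar> \<le> \<bar>w j\<bar>" using ord[OF jS] iP iN by auto
      moreover have "j \<in> {1..p}" using jS Shsub by auto
      ultimately have "j \<in> S" using sep[OF iS] by fastforce
      then show "j \<in> S - {i}" using jS iN by auto
    qed
    then have "card S_hat \<le> card (S - {i})" using finS by (intro card_mono) auto
    also have "\<dots> = k - 1" using cardS iS finS by simp
    finally show False using cardSh dk \<open>0<k\<close> by simp
  qed
qed

end
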